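(* Let $G=(V,E,w)$ be a finite connected weighted graph and $(x,y)\in E$. Let $\mathbf d,\mathbf d'$ be two vectors of positive edge lengths on $E$ which differ only on the edge $(x,y)$, with $d(x,y)\le d'(x,y)$. Then for every function $g:V\to\mathbb R$ that is $1$-Lipschitz with respect to $\mathbf d'$ and satisfies $g(y)-g(x)=d'(x,y)$, there exists a function $g':V\to\mathbb R$ that is $1$-Lipschitz with respect to $\mathbf d$, satisfies $g'(y)-g'(x)=d(x,y)$, and satisfies $d(x,y)-d'(x,y)\le g'(z)-g(z)\le 0$ for all $z\in V$.
   Context: A function $f:V\to\mathbb R$ is $1$-Lipschitz with respect to an edge-length vector $\mathbf d$ (written $f\in Lip(1)$) if $|f(s)-f(t)|\le d(s,t)$ for every edge $(s,t)\in E$. *)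

theory Defs
  imports Complex_Main
begin

definition weighted_graph :: "'a set \<Rightarrow> ('a \<times> 'a) set \<Rightarrow> ('a \<times> 'a \<Rightarrow> real) \<Rightarrow> bool" where
  "weighted_graph V E w \<longleftrightarrow> finite V \<and> E \<subseteq> V \<times> V \<and> sym E \<and> irrefl E
     \<and> (\<forall>(s,t)\<in>E. w (s,t) > 0 \<and> w (s,t) = w (t,s))"

definition connected_graph :: "'a set \<Rightarrow> ('a \<times> 'a) set \<Rightarrow> bool" where
  "connected_graph V E \<longleftrightarrow> (\<forall>u\<in>V. \<forall>v\<in>V. (u,v) \<in> E\<^sup>*)"

definition edge_lengths :: "('a \<times> 'a) set \<Rightarrow> ('a \<times> 'a \<Rightarrow> real) \<Rightarrow> bool" where
  "edge_lengths E d \<longleftrightarrow> (\<forall>(s,t)\<in>E. d (s,t) > 0 \<and> d (s,t) = d (t,s))"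

definition Lip1 :: "('a \<times> 'a) set \<Rightarrow> ('a \<times> 'a \<Rightarrow> real) \<Rightarrow> ('a \<Rightarrow> real) \<Rightarrow> bool" where
  "Lip1 E d f \<longleftrightarrow> (\<forall>(s,t)\<in>E. \<bar>f s - f t\<bar> \<le> d (s,t))"

end

theory Submission
  imports Defs
begin

lemma clamp_lip:
  fixes a b c \<delta> :: real
  assumes "\<delta> \<ge> 0"
  shows "\<bar>max (a - \<delta>) (min a c) - max (b - \<delta>) (min b c)\<bar> \<le> \<bar>a - b\<bar>"
  using assms by (simp add: max_def min_def abs_if split: if_splits)

theorem lemma5p2:
  fixes V :: "'a set" and E :: "('a \<times> 'a) set" and w d d' :: "'a \<times> 'a \<Rightarrow> real"
    and x y :: 'a and g :: "'a \<Rightarrow> real"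
  assumes "weighted_graph V E w" and "connected_graph V E"
    and "(x, y) \<in> E"
    and "edge_lengths E d" and "edge_lengths E d'"
    and "\<forall>e\<in>E. e \<noteq> (x, y) \<and> e \<noteq> (y, x) \<longrightarrow> d e = d' e"
    and "d (x, y) \<le> d' (x, y)"
    and "Lip1 E d' g" and "g y - g x = d' (x, y)"
  shows "\<exists>g' :: 'a \<Rightarrow> real. Lip1 E d g' \<and> g' y - g' x = d (x, y)
           \<and> (\<forall>z\<in>V. d (x, y) - d' (x, y) \<le> g' z - g z \<and> g' z - g z \<le> 0)"
proof -
  define \<delta> where "\<delta> = d' (x, y) - d (x, y)"
  define c where "c = g y - \<delta>"
  define g' where "g' = (\<lambda>z. max (g z - \<delta>) (min (g z) c))"
  have d0: "\<delta> \<ge> 0" using assms(7) by (simp add: \<delta>_def)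
  have dpos: "d (x, y) > 0" and dsym: "d (y, x) = d (x, y)"
    using assms(3,4) unfolding edge_lengths_def by auto
  have gy: "g' y = g y - \<delta>" using d0 by (simp add: g'_def c_def)
  have gx: "g' x = g x" using dpos assms(7,9) by (simp add: g'_def c_def \<delta>_def max_def min_def)
  have eq: "g' y - g' x = d (x, y)" using gy gx assms(9) by (simp add: \<delta>_def)
  have lip: "Lip1 E d g'"
    unfolding Lip1_def
  proof (intro ballI, clarify)
    fix s t assume st: "(s, t) \<in> E"
    show "\<bar>g' s - g' t\<bar> \<le> d (s, t)"
    proof (cases "(s, t) = (x, y) \<or> (s, t) = (y, x)")
      case True
      then show ?thesis using eq dsym dpos by (auto simp: abs_if)
    next
      case False
      have "\<bar>g' s - g' t\<bar> \<le> \<bar>g s - g t\<bar>" unfolding g'_def by (rule clamp_lip[OF d0])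
      also have "\<dots> \<le> d' (s, t)" using assms(8) st unfolding Lip1_def by auto
      also have "\<dots> = d (s, t)" using assms(6) st False by auto
      finally show ?thesis .
    qed
  qed
  have bnd: "\<forall>z\<in>V. d (x, y) - d' (x, y) \<le> g' z - g z \<and> g' z - g z \<le> 0"
    using d0 by (auto simp: g'_def \<delta>_def max_def min_def)
  show ?thesis using lip eq bnd by blast
qed

end
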